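(* In the setting described in the context, assume that (1) $\nu_x>0$ for every $x\in\mathcal X$ with $\alpha_x>0$; (2) $P_{\rm all}(W,x)>0$ whenever $W^x<\alpha_x$; (3) $\sum_{x\in D}\alpha_x\le\sum_{y\in N(D)}\beta_y$ for all $D\subseteq\mathcal X$, where $N(D)=\bigcup_{x\in D}N_x$. Then, from any initial partial allocation state, with probability $1$ the Markov process $W(t)$ enters the set $\mathcal W$ of allocation states after a finite number of jumps.
   Context: $\mathcal X$ is a finite set of units, $\mathcal G=(\mathcal X,\mathcal E)$ a directed graph, $N_x=\{y:(x,y)\in\mathcal E\}$, and $\alpha_x,\beta_x$ non-negative integers. A partial allocation state is a matrix $W\in\mathbb N^{\mathcal X\times\mathcal X}$ with $W_{xy}=0$ whenever $(x,y)\notin\mathcal E$, $W^x:=\sum_yW_{xy}\le\alpha_x$ and $W_y:=\sum_xW_{xy}\le\beta_y$; it is an allocation state if $W^x=\alpha_x$ for all $x$. $\mathcal W_p$ and $\mathcal W$ denote the sets of partial allocation states and allocation states; $e_{xy}$ is the matrix with $1$ in entry $(x,y)$ and $0$ elsewhere. Fix reals $\lambda_y$, parameters $k_c,k_a\ge0$, $\gamma>0$, and set $f_{xy}(W)=\lambda_y-k_cW_y/\beta_y+k_aW_{xy}$. Let $\mathcal X^x(W)=\{y\in N_x: W_y<\beta_y\}$ and define the Gibbs distribution on $\mathcal X^x(W)$ by $p_y(W,x)=e^{\gamma f_{xy}(W+e_{xy})}/\sum_{y'\in\mathcal X^x(W)}e^{\gamma f_{xy'}(W+e_{xy'})}$.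 For each unit $x$ and state $W$ let $P_{\rm all}(W,x),P_{\rm dis}(W,x)\ge0$ with $P_{\rm all}+P_{\rm dis}=1$, $P_{\rm all}(W,x)=0$ if $W^x=\alpha_x$, $P_{\rm dis}(W,x)=0$ if $W^x=0$. The process $W(t)$ on $\mathcal W_p$ is the continuous-time Markov process in which each unit $x$ activates according to an independent Poisson clock of rate $\nu_x\ge0$; when $x$ activates in state $W$: with probability $P_{\rm all}(W,x)$ it performs an allocation move, choosing $y^*\in\mathcal X^x(W)$ with probability $p_{y^*}(W,x)$ and passing to $W+e_{xy^*}$ (no action is possible if $\mathcal X^x(W)=\emptyset$); with probability $P_{\rm dis}(W,x)$ it performs a distribution move, choosing $\bar y$ with probability $W_{x\bar y}/W^x$, then $y^*\in\mathcal X^x(W-e_{x\bar y})$ with probability $p_{y^*}(W-e_{x\bar y},x)$, and passing to $W-e_{x\bar y}+e_{xy^*}$. *)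

theory Defs
  imports "HOL-Probability.Probability"
begin

text \<open>Allocation matrices are functions W :: 'x \<Rightarrow> 'x \<Rightarrow> nat (W x y = W_xy).
  The unit set is a finite set X, the graph has edge set E \<subseteq> X \<times> X.\<close>

type_synonym 'x mat = "'x \<Rightarrow> 'x \<Rightarrow> nat"

definition row_sum :: "'x set \<Rightarrow> 'x mat \<Rightarrow> 'x \<Rightarrow> nat" where
  "row_sum X W x = (\<Sum>y\<in>X. W x y)"

definition col_sum :: "'x set \<Rightarrow> 'x mat \<Rightarrow> 'x \<Rightarrow> nat" where
  "col_sum X W y = (\<Sum>x\<in>X. W x y)"

definition unit_mat :: "'x \<Rightarrow> 'x \<Rightarrow> 'x mat" where
  "unit_mat x y = (\<lambda>a b. if a = x \<and> b = y then 1 else 0)"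

definition mat_add :: "'x mat \<Rightarrow> 'x mat \<Rightarrow> 'x mat" where
  "mat_add A B = (\<lambda>a b. A a b + B a b)"

definition mat_sub :: "'x mat \<Rightarrow> 'x mat \<Rightarrow> 'x mat" where
  "mat_sub A B = (\<lambda>a b. A a b - B a b)"

definition partial_states ::
  "'x set \<Rightarrow> ('x \<times> 'x) set \<Rightarrow> ('x \<Rightarrow> nat) \<Rightarrow> ('x \<Rightarrow> nat) \<Rightarrow> 'x mat set" where
  "partial_states X E \<alpha> \<beta> =
     {W. (\<forall>x y. (x, y) \<notin> E \<longrightarrow> W x y = 0)
       \<and> (\<forall>x\<in>X. row_sum X W x \<le> \<alpha> x)
       \<and> (\<forall>y\<in>X. col_sum X W y \<le> \<beta> y)}"

definition alloc_states ::
  "'x set \<Rightarrow> ('x \<times> 'x) set \<Rightarrow> ('x \<Rightarrow> nat) \<Rightarrow> ('x \<Rightarrow> nat) \<Rightarrow> 'x mat set" where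
  "alloc_states X E \<alpha> \<beta> =
     {W \<in> partial_states X E \<alpha> \<beta>. \<forall>x\<in>X. row_sum X W x = \<alpha> x}"

definition nbhd :: "('x \<times> 'x) set \<Rightarrow> 'x set \<Rightarrow> 'x set" where
  "nbhd E D = {y. \<exists>x\<in>D. (x, y) \<in> E}"

definition avail :: "'x set \<Rightarrow> ('x \<times> 'x) set \<Rightarrow> ('x \<Rightarrow> nat) \<Rightarrow> 'x mat \<Rightarrow> 'x \<Rightarrow> 'x set" where
  "avail X E \<beta> W x = {y. (x, y) \<in> E \<and> col_sum X W y < \<beta> y}"

definition fit :: "'x set \<Rightarrow> ('x \<Rightarrow> nat) \<Rightarrow> ('x \<Rightarrow> real) \<Rightarrow> real \<Rightarrow> real \<Rightarrow> 'x mat \<Rightarrow> 'x \<Rightarrow> 'x \<Rightarrow> real" where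
  "fit X \<beta> lam kc ka W x y =
     lam y - kc * real (col_sum X W y) / real (\<beta> y) + ka * real (W x y)"

definition gibbs ::
  "'x set \<Rightarrow> ('x \<times> 'x) set \<Rightarrow> ('x \<Rightarrow> nat) \<Rightarrow> ('x \<Rightarrow> real) \<Rightarrow> real \<Rightarrow> real \<Rightarrow> real
   \<Rightarrow> 'x mat \<Rightarrow> 'x \<Rightarrow> 'x pmf" where
  "gibbs X E \<beta> lam kc ka \<gamma> W x =
     embed_pmf (\<lambda>y. if y \<in> avail X E \<beta> W x then
        exp (\<gamma> * fit X \<beta> lam kc ka (mat_add W (unit_mat x y)) x y) /
        (\<Sum>y'\<in>avail X E \<beta> W x. exp (\<gamma> * fit X \<beta> lam kc ka (mat_add W (unit_mat x y')) x y'))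
      else 0)"

definition alloc_move ::
  "'x set \<Rightarrow> ('x \<times> 'x) set \<Rightarrow> ('x \<Rightarrow> nat) \<Rightarrow> ('x \<Rightarrow> real) \<Rightarrow> real \<Rightarrow> real \<Rightarrow> real
   \<Rightarrow> 'x mat \<Rightarrow> 'x \<Rightarrow> 'x mat pmf" where
  "alloc_move X E \<beta> lam kc ka \<gamma> W x =
     (if avail X E \<beta> W x = {} then return_pmf W
      else map_pmf (\<lambda>y. mat_add W (unit_mat x y)) (gibbs X E \<beta> lam kc ka \<gamma> W x))"

definition dist_move ::
  "'x set \<Rightarrow> ('x \<times> 'x) set \<Rightarrow> ('x \<Rightarrow> nat) \<Rightarrow> ('x \<Rightarrow> real) \<Rightarrow> real \<Rightarrow> real \<Rightarrow> real
   \<Rightarrow> 'x mat \<Rightarrow> 'x \<Rightarrow> 'x mat pmf" where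
  "dist_move X E \<beta> lam kc ka \<gamma> W x =
     bind_pmf (embed_pmf (\<lambda>yb. real (W x yb) / real (row_sum X W x)))
       (\<lambda>yb. let W' = mat_sub W (unit_mat x yb) in
              if avail X E \<beta> W' x = {} then return_pmf W
              else map_pmf (\<lambda>y. mat_add W' (unit_mat x y)) (gibbs X E \<beta> lam kc ka \<gamma> W' x))"

definition activation ::
  "'x set \<Rightarrow> ('x \<times> 'x) set \<Rightarrow> ('x \<Rightarrow> nat) \<Rightarrow> ('x \<Rightarrow> real) \<Rightarrow> real \<Rightarrow> real \<Rightarrow> real
   \<Rightarrow> ('x mat \<Rightarrow> 'x \<Rightarrow> real) \<Rightarrow> 'x mat \<Rightarrow> 'x \<Rightarrow> 'x mat pmf" where
  "activation X E \<beta> lam kc ka \<gamma> Pall W x =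
     bind_pmf (bernoulli_pmf (Pall W x))
       (\<lambda>b. if b then alloc_move X E \<beta> lam kc ka \<gamma> W x
            else dist_move X E \<beta> lam kc ka \<gamma> W x)"

text \<open>Embedded (uniformized) chain of activations of the continuous-time process:
  the next activating unit is x with probability \<nu>_x / \<Sum>\<nu> (independent Poisson clocks).\<close>
definition step ::
  "'x set \<Rightarrow> ('x \<times> 'x) set \<Rightarrow> ('x \<Rightarrow> nat) \<Rightarrow> ('x \<Rightarrow> real) \<Rightarrow> real \<Rightarrow> real \<Rightarrow> real
   \<Rightarrow> ('x mat \<Rightarrow> 'x \<Rightarrow> real) \<Rightarrow> ('x \<Rightarrow> real) \<Rightarrow> 'x mat \<Rightarrow> 'x mat pmf" where
  "step X E \<beta> lam kc ka \<gamma> Pall \<nu> W =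
     (if (\<Sum>x\<in>X. \<nu> x) = 0 then return_pmf W
      else bind_pmf (embed_pmf (\<lambda>x. if x \<in> X then \<nu> x / (\<Sum>x'\<in>X. \<nu> x') else 0))
             (activation X E \<beta> lam kc ka \<gamma> Pall W))"

text \<open>Distribution after n activations of the chain stopped upon entering the set A.
  The probability that it lies in A is P(the chain hits A within n activations).\<close>
fun stopped_dist :: "('s \<Rightarrow> 's pmf) \<Rightarrow> 's set \<Rightarrow> 's \<Rightarrow> nat \<Rightarrow> 's pmf" where
  "stopped_dist K A s0 0 = return_pmf s0"
| "stopped_dist K A s0 (Suc n) =
     bind_pmf (stopped_dist K A s0 n) (\<lambda>s. if s \<in> A then return_pmf s else K s)"

end

theory Submission
  imports Defs
begin


lemma measure_bind_pmf_real:
  "measure_pmf.prob (bind_pmf M N) X = (\<integral>x. measure_pmf.prob (N x) X \<partial>measure_pmf M)"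
proof -
  have int: "integrable (measure_pmf M) (\<lambda>x. measure_pmf.prob (N x) X)"
    by (rule measure_pmf.integrable_const_bound[where B=1]) auto
  have "ennreal (measure_pmf.prob (bind_pmf M N) X) = emeasure (bind_pmf M N) X"
    by (simp add: measure_pmf.emeasure_eq_measure)
  also have "\<dots> = (\<integral>\<^sup>+x. emeasure (N x) X \<partial>M)" by simp
  also have "\<dots> = (\<integral>\<^sup>+x. ennreal (measure_pmf.prob (N x) X) \<partial>M)"
    by (simp add: measure_pmf.emeasure_eq_measure)
  also have "\<dots> = ennreal (\<integral>x. measure_pmf.prob (N x) X \<partial>measure_pmf M)"
    by (rule nn_integral_eq_integral[OF int]) auto
  finally show ?thesis
    by (simp add: ennreal_inj integral_nonneg_AE)
qed

lemma integral_pmf_ge_point: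
  fixes g :: "'a \<Rightarrow> real"
  assumes "\<And>x. 0 \<le> g x" "\<And>x. g x \<le> 1"
  shows "pmf p u * g u \<le> (\<integral>x. g x \<partial>measure_pmf p)"
proof -
  have int: "integrable (measure_pmf p) g"
    by (rule measure_pmf.integrable_const_bound[where B=1]) (auto simp: assms)
  have "(\<integral>x. indicator {u} x * g u \<partial>measure_pmf p) \<le> (\<integral>x. g x \<partial>measure_pmf p)"
    by (rule integral_mono[OF _ int])
      (auto simp: assms split: split_indicator intro!: measure_pmf.integrable_const_bound[where B=1])
  moreover have "(\<integral>x. indicator {u} x * g u \<partial>measure_pmf p) = (\<integral>x. indicator {u} x \<partial>measure_pmf p) * g u"
    by (rule integral_mult_left_zero)
  moreover have "(\<integral>x. indicator {u} x \<partial>measure_pmf p) = pmf p u"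
    by (simp add: measure_pmf_single)
  ultimately show ?thesis by simp
qed

definition Qk :: "('s \<Rightarrow> 's pmf) \<Rightarrow> 's set \<Rightarrow> 's \<Rightarrow> 's pmf" where
  "Qk K A = (\<lambda>s. if s \<in> A then return_pmf s else K s)"

lemma stopped_Suc': "stopped_dist K A s (Suc n) = bind_pmf (Qk K A s) (\<lambda>t. stopped_dist K A t n)"
proof (induction n)
  case 0
  then show ?case by (simp add: bind_return_pmf bind_return_pmf' Qk_def)
next
  case (Suc n)
  have "stopped_dist K A s (Suc (Suc n)) = bind_pmf (stopped_dist K A s (Suc n)) (Qk K A)"
    by (simp add: Qk_def)
  also have "\<dots> = bind_pmf (Qk K A s) (\<lambda>t. bind_pmf (stopped_dist K A t n) (Qk K A))"
    by (subst Suc) (simp only: bind_assoc_pmf)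
  also have "\<dots> = bind_pmf (Qk K A s) (\<lambda>t. stopped_dist K A t (Suc n))"
    by (simp add: Qk_def)
  finally show ?case .
qed

lemma stopped_add: "stopped_dist K A s (n + m) = bind_pmf (stopped_dist K A s n) (\<lambda>t. stopped_dist K A t m)"
proof (induction m)
  case 0
  then show ?case by (simp add: bind_return_pmf')
next
  case (Suc m)
  have "stopped_dist K A s (n + Suc m) = bind_pmf (stopped_dist K A s (n + m)) (Qk K A)"
    by (simp add: Qk_def)
  also have "\<dots> = bind_pmf (stopped_dist K A s n) (\<lambda>t. bind_pmf (stopped_dist K A t m) (Qk K A))"
    by (simp add: Suc bind_assoc_pmf)
  also have "\<dots> = bind_pmf (stopped_dist K A s n) (\<lambda>t. stopped_dist K A t (Suc m))"
    by (simp add: Qk_def)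
  finally show ?case .
qed

lemma stopped_in_A: "s \<in> A \<Longrightarrow> stopped_dist K A s n = return_pmf s"
  by (induction n) (auto simp: bind_return_pmf)

lemma stopped_support:
  assumes "\<And>s. s \<in> S \<Longrightarrow> s \<notin> A \<Longrightarrow> set_pmf (K s) \<subseteq> S" "s \<in> S"
  shows "set_pmf (stopped_dist K A s n) \<subseteq> S"
  using assms(2)
proof (induction n)
  case (Suc n)
  show ?case
  proof
    fix x assume "x \<in> set_pmf (stopped_dist K A s (Suc n))"
    then obtain t where t: "t \<in> set_pmf (stopped_dist K A s n)" and
      x: "x \<in> set_pmf (if t \<in> A then return_pmf t else K t)" by auto
    have "t \<in> S" using t Suc by blast
    then show "x \<in> S" using x assms(1)[of t] by (auto split: if_splits)
  qed
qed simp

lemma hitting_generic: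
  fixes K :: "'s \<Rightarrow> 's pmf"
  assumes finS: "finite S" and s0: "s0 \<in> S"
    and closed: "\<And>s. s \<in> S \<Longrightarrow> s \<notin> A \<Longrightarrow> set_pmf (K s) \<subseteq> S"
    and reach_alloc: "\<And>s. s \<in> S \<Longrightarrow> \<exists>t\<in>A. (s, t) \<in> {(s,t). s \<in> S \<and> s \<notin> A \<and> t \<in> set_pmf (K s)}\<^sup>*"
  shows "(\<lambda>n. measure_pmf.prob (stopped_dist K A s0 n) A) \<longlonglongrightarrow> 1"
proof -
  define R where "R = {(s,t). s \<in> S \<and> s \<notin> A \<and> t \<in> set_pmf (K s)}"
  define f where "f n s = measure_pmf.prob (stopped_dist K A s n) A" for n s
  have f01: "0 \<le> f n s" "f n s \<le> 1" for n s by (auto simp: f_def)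
  have fA: "s \<in> A \<Longrightarrow> f n s = 1" for n s by (simp add: f_def stopped_in_A)
  have fSuc: "f (Suc n) s = (\<integral>t. f n t \<partial>measure_pmf (Qk K A s))" for n s
    by (simp only: f_def stopped_Suc' measure_bind_pmf_real)
  define P where "P = {pmf (K s) t | s t. s \<in> S \<and> s \<notin> A \<and> t \<in> set_pmf (K s)}"
  have "P \<subseteq> (\<lambda>(s,t). pmf (K s) t) ` (S \<times> S)"
    using closed unfolding P_def by fastforce
  hence finP: "finite P" using finS by (meson finite_SigmaI finite_imageI finite_subset)
  define c where "c = Min (insert 1 P)"
  have cpos: "0 < c" unfolding c_def using finP
    by (subst Min_gr_iff) (auto simp: P_def pmf_positive)
  have cle1: "c \<le> 1" unfolding c_def using finP by simp
  have cle: "c \<le> pmf (K s) t" if "s \<in> S" "s \<notin> A" "t \<in> set_pmf (K s)" for s t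
    unfolding c_def using finP that by (intro Min_le) (auto simp: P_def)
  have key: "\<forall>s m. (s,t) \<in> R ^^ n \<longrightarrow> t \<in> A \<longrightarrow> n \<le> m \<longrightarrow> c ^ n \<le> f m s" for n t
  proof (induction n)
    case 0
    then show ?case by (auto simp: fA)
  next
    case (Suc n)
    show ?case
    proof (intro allI impI)
      fix s m assume st: "(s, t) \<in> R ^^ Suc n" and tA: "t \<in> A" and nm: "Suc n \<le> m"
      obtain u where su: "(s,u) \<in> R" and ut: "(u,t) \<in> R ^^ n" using relpow_Suc_D2[OF st] by blast
      obtain m' where m': "m = Suc m'" "n \<le> m'" using nm by (cases m) auto
      have sS: "s \<in> S" "s \<notin> A" "u \<in> set_pmf (K s)" using su by (auto simp: R_def)
      have "c ^ Suc n = c * c ^ n" by simp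
      also have "\<dots> \<le> pmf (K s) u * f m' u"
        using Suc.IH ut tA m' cle[OF sS] cpos by (intro mult_mono) auto
      also have "\<dots> \<le> (\<integral>t. f m' t \<partial>measure_pmf (K s))"
        by (rule integral_pmf_ge_point) (auto simp: f01)
      also have "\<dots> = f m s" using m' sS by (simp add: fSuc Qk_def)
      finally show "c ^ Suc n \<le> f m s" .
    qed
  qed
  have "\<forall>s\<in>S. \<exists>n. \<exists>t\<in>A. (s,t) \<in> R ^^ n"
    using reach_alloc unfolding R_def by (meson rtrancl_power)
  then obtain nf where nf: "\<And>s. s \<in> S \<Longrightarrow> \<exists>t\<in>A. (s,t) \<in> R ^^ nf s" by metis
  define N where "N = (\<Sum>s\<in>S. nf s)"
  define q where "q = c ^ N"
  have qpos: "0 < q" "q \<le> 1" using cpos cle1 by (auto simp: q_def power_le_one)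
  have fN: "q \<le> f N s" if sS: "s \<in> S" for s
  proof -
    obtain t where t: "t \<in> A" "(s,t) \<in> R ^^ nf s" using nf[OF sS] by blast
    have le: "nf s \<le> N" unfolding N_def using finS sS by (intro member_le_sum) auto
    have "q \<le> c ^ nf s" unfolding q_def using cpos cle1 le by (simp add: power_decreasing)
    also have "\<dots> \<le> f N s" using key t le by blast
    finally show ?thesis .
  qed
  define g where "g n = 1 - f n s0" for n
  have supp: "set_pmf (stopped_dist K A s0 n) \<subseteq> S" for n
    by (rule stopped_support[OF closed s0])
  have mono: "f n s0 \<le> f (Suc n) s0" for n
  proof -
    have "f (Suc n) s0 = (\<integral>t. measure_pmf.prob (Qk K A t) A \<partial>measure_pmf (stopped_dist K A s0 n))"
      by (simp add: f_def measure_bind_pmf_real Qk_def)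
    also have "\<dots> \<ge> (\<integral>t. indicator A t \<partial>measure_pmf (stopped_dist K A s0 n))"
      by (rule integral_mono) (auto intro!: measure_pmf.integrable_const_bound[where B=1]
          simp: Qk_def split: split_indicator)
    finally show ?thesis by (simp add: f_def)
  qed
  have gmono: "g m \<le> g n" if "n \<le> m" for n m
    using that
  proof (induction m)
    case 0 then show ?case by simp
  next
    case (Suc m)
    then show ?case using mono[of m] by (cases "n = Suc m") (auto simp: g_def)
  qed
  have tail: "g (n + N) \<le> (1 - q) * g n" for n
  proof -
    let ?\<mu> = "measure_pmf (stopped_dist K A s0 n)"
    have "f (n + N) s0 = (\<integral>t. f N t \<partial>?\<mu>)"
      by (simp add: f_def stopped_add measure_bind_pmf_real)
    also have "\<dots> \<ge> (\<integral>t. q + (1 - q) * indicator A t \<partial>?\<mu>)"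
    proof (rule integral_mono_AE)
      show "integrable ?\<mu> (\<lambda>t. q + (1 - q) * indicator A t)"
        by (rule measure_pmf.integrable_const_bound[where B="q + (1-q)"])
          (use qpos in \<open>auto split: split_indicator\<close>)
      show "integrable ?\<mu> (\<lambda>t. f N t)"
        by (rule measure_pmf.integrable_const_bound[where B=1]) (auto simp: f01)
      show "AE t in ?\<mu>. q + (1 - q) * indicator A t \<le> f N t"
        using supp[of n] fN fA by (auto simp: AE_measure_pmf_iff split: split_indicator)
    qed
    also have "(\<integral>t. q + (1 - q) * indicator A t \<partial>?\<mu>) = q + (1 - q) * f n s0"
    proof -
      have i1: "integrable ?\<mu> (\<lambda>t. (1 - q) * indicator A t)"
        by (intro integrable_mult_right measure_pmf.integrable_const_bound[where B=1])
          (auto split: split_indicator)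
      have "(\<integral>t. q + (1 - q) * indicator A t \<partial>?\<mu>) = (\<integral>t. q \<partial>?\<mu>) + (\<integral>t. (1 - q) * indicator A t \<partial>?\<mu>)"
        by (rule Bochner_Integration.integral_add[OF _ i1]) simp
      also have "(\<integral>t. (1 - q) * indicator A t \<partial>?\<mu>) = (1 - q) * (\<integral>t. indicator A t \<partial>?\<mu>)"
        by (rule integral_mult_right_zero)
      finally show ?thesis by (simp add: f_def)
    qed
    finally show ?thesis by (simp add: g_def algebra_simps)
  qed
  have gpow: "g (k * N) \<le> (1 - q) ^ k" for k
  proof (induction k)
    case 0 then show ?case by (simp add: g_def f01)
  next
    case (Suc k)
    have "g (Suc k * N) = g (k * N + N)" by (simp add: add.commute)
    also have "\<dots> \<le> (1 - q) * g (k * N)" by (rule tail)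
    also have "\<dots> \<le> (1 - q) * (1 - q) ^ k" using Suc qpos by (intro mult_left_mono) auto
    finally show ?case by simp
  qed
  show ?thesis
  proof (rule LIMSEQ_I)
    fix r :: real assume r: "0 < r"
    obtain k where k: "(1 - q) ^ k < r" using real_arch_pow_inv[OF r, of "1 - q"] qpos by auto
    have "norm (f n s0 - 1) < r" if "k * N \<le> n" for n
    proof -
      have "norm (f n s0 - 1) = g n" using f01[of n s0] by (simp add: g_def)
      also have "\<dots> \<le> g (k * N)" by (rule gmono[OF that])
      also have "\<dots> < r" using gpow[of k] k by simp
      finally show ?thesis .
    qed
    thus "\<exists>no. \<forall>n\<ge>no. norm (measure_pmf.prob (stopped_dist K A s0 n) A - 1) < r"
      unfolding f_def by blast
  qed
qed



fun aug :: "'x set \<Rightarrow> ('x \<times> 'x) set \<Rightarrow> ('x \<Rightarrow> nat) \<Rightarrow> 'x mat \<Rightarrow> nat \<Rightarrow> 'x \<Rightarrow> bool" where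
  "aug X E \<beta> W 0 x = (x \<in> X \<and> avail X E \<beta> W x \<noteq> {})"
| "aug X E \<beta> W (Suc k) x = (\<exists>y x'. (x, y) \<in> E \<and> 0 < W x' y \<and> aug X E \<beta> W k x')"

inductive_set hallD :: "('x \<times> 'x) set \<Rightarrow> 'x mat \<Rightarrow> 'x \<Rightarrow> 'x set" for E W x0 where
  baseD: "x0 \<in> hallD E W x0"
| stepD: "x \<in> hallD E W x0 \<Longrightarrow> (x, y) \<in> E \<Longrightarrow> 0 < W x' y \<Longrightarrow> x' \<in> hallD E W x0"

definition mv :: "'x mat \<Rightarrow> 'x \<Rightarrow> 'x \<Rightarrow> 'x \<Rightarrow> 'x mat" where
  "mv W z yb ys = mat_add (mat_sub W (unit_mat z yb)) (unit_mat z ys)"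

lemma row_add:
  assumes "finite X" "y \<in> X"
  shows "row_sum X (mat_add W (unit_mat x y)) a = row_sum X W a + (if a = x then 1 else 0)"
proof (cases "a = x")
  case True
  then show ?thesis using assms
    by (simp add: row_sum_def mat_add_def unit_mat_def sum.distrib)
next
  case False
  then show ?thesis by (simp add: row_sum_def mat_add_def unit_mat_def)
qed

lemma col_add:
  assumes "finite X" "x \<in> X"
  shows "col_sum X (mat_add W (unit_mat x y)) b = col_sum X W b + (if b = y then 1 else 0)"
proof (cases "b = y")
  case True
  then show ?thesis using assms
    by (simp add: col_sum_def mat_add_def unit_mat_def sum.distrib)
next
  case False
  then show ?thesis by (simp add: col_sum_def mat_add_def unit_mat_def)
qed

lemma sub_add: "0 < W z yb \<Longrightarrow> mat_add (mat_sub W (unit_mat z yb)) (unit_mat z yb) = W"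
  by (auto simp: fun_eq_iff mat_add_def mat_sub_def unit_mat_def)

lemma row_sub:
  assumes "finite X" "yb \<in> X" "0 < W z yb"
  shows "row_sum X (mat_sub W (unit_mat z yb)) a + (if a = z then 1 else 0) = row_sum X W a"
  using row_add[OF assms(1,2), of "mat_sub W (unit_mat z yb)" z a] sub_add[of W z yb, OF assms(3)] by simp

lemma col_sub:
  assumes "finite X" "z \<in> X" "0 < W z yb"
  shows "col_sum X (mat_sub W (unit_mat z yb)) b + (if b = yb then 1 else 0) = col_sum X W b"
  using col_add[OF assms(1,2), of "mat_sub W (unit_mat z yb)" yb b] sub_add[of W z yb, OF assms(3)] by simp

lemma mv_other: "a \<noteq> z \<Longrightarrow> mv W z yb ys a b = W a b"
  by (simp add: mv_def mat_add_def mat_sub_def unit_mat_def)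

lemma embed_set:
  fixes g :: "'a \<Rightarrow> real"
  assumes "finite B" "\<And>x. 0 \<le> g x" "\<And>x. x \<notin> B \<Longrightarrow> g x = 0" "sum g B = 1"
  shows "set_pmf (embed_pmf g) = {x. g x \<noteq> 0}"
proof -
  have "(\<integral>\<^sup>+x. ennreal (g x) \<partial>count_space UNIV) = (\<Sum>x\<in>B. ennreal (g x))"
    by (rule nn_integral_count_space') (use assms in auto)
  also have "\<dots> = ennreal (sum g B)" using assms(2) by (simp add: sum_ennreal)
  finally have "(\<integral>\<^sup>+x. ennreal (g x) \<partial>count_space UNIV) = 1" using assms(4) by simp
  then show ?thesis using set_embed_pmf[of g] assms(2) by blast
qed

lemma bern_True: "0 \<le> p \<Longrightarrow> p \<le> 1 \<Longrightarrow> 0 < p \<Longrightarrow> True \<in> set_pmf (bernoulli_pmf p)"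
  by (simp add: set_pmf_iff)

lemma bern_False: "0 \<le> p \<Longrightarrow> p \<le> 1 \<Longrightarrow> p < 1 \<Longrightarrow> False \<in> set_pmf (bernoulli_pmf p)"
  by (simp add: set_pmf_iff)

lemma bern_True': "0 \<le> p \<Longrightarrow> p \<le> 1 \<Longrightarrow> True \<in> set_pmf (bernoulli_pmf p) \<Longrightarrow> 0 < p"
  by (simp add: set_pmf_iff)

lemma bern_False': "0 \<le> p \<Longrightarrow> p \<le> 1 \<Longrightarrow> False \<in> set_pmf (bernoulli_pmf p) \<Longrightarrow> p < 1"
  by (simp add: set_pmf_iff)

locale asetting =
  fixes X :: "'x set" and E :: "('x \<times> 'x) set"
    and \<alpha> \<beta> :: "'x \<Rightarrow> nat"
    and lam :: "'x \<Rightarrow> real" and kc ka \<gamma> :: real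
    and \<nu> :: "'x \<Rightarrow> real"
    and Pall Pdis :: "'x mat \<Rightarrow> 'x \<Rightarrow> real"
  assumes fin: "finite X"
    and graph: "E \<subseteq> X \<times> X"
    and \<nu>_nonneg: "\<forall>x\<in>X. \<nu> x \<ge> 0"
    and P_nonneg: "\<forall>W\<in>partial_states X E \<alpha> \<beta>. \<forall>x\<in>X. Pall W x \<ge> 0 \<and> Pdis W x \<ge> 0"
    and P_sum: "\<forall>W\<in>partial_states X E \<alpha> \<beta>. \<forall>x\<in>X. Pall W x + Pdis W x = 1"
    and Pall_full: "\<forall>W\<in>partial_states X E \<alpha> \<beta>. \<forall>x\<in>X. row_sum X W x = \<alpha> x \<longrightarrow> Pall W x = 0"
    and Pdis_empty: "\<forall>W\<in>partial_states X E \<alpha> \<beta>. \<forall>x\<in>X. row_sum X W x = 0 \<longrightarrow> Pdis W x = 0"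
    and h1: "\<forall>x\<in>X. \<alpha> x > 0 \<longrightarrow> \<nu> x > 0"
    and h2: "\<forall>W\<in>partial_states X E \<alpha> \<beta>. \<forall>x\<in>X. row_sum X W x < \<alpha> x \<longrightarrow> Pall W x > 0"
    and h3: "\<forall>D\<subseteq>X. (\<Sum>x\<in>D. \<alpha> x) \<le> (\<Sum>y\<in>nbhd E D. \<beta> y)"
begin

abbreviation "S \<equiv> partial_states X E \<alpha> \<beta>"
abbreviation "AS \<equiv> alloc_states X E \<alpha> \<beta>"
abbreviation "K \<equiv> step X E \<beta> lam kc ka \<gamma> Pall \<nu>"

lemma S_E: "W \<in> S \<Longrightarrow> 0 < W a b \<Longrightarrow> (a, b) \<in> E"
  unfolding partial_states_def by (metis (mono_tags, lifting) less_numeral_extra(3) mem_Collect_eq)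

lemma S_EX: "W \<in> S \<Longrightarrow> 0 < W a b \<Longrightarrow> a \<in> X \<and> b \<in> X"
  using S_E graph by blast

lemma S_row: "W \<in> S \<Longrightarrow> a \<in> X \<Longrightarrow> row_sum X W a \<le> \<alpha> a"
  unfolding partial_states_def by blast

lemma S_col: "W \<in> S \<Longrightarrow> a \<in> X \<Longrightarrow> col_sum X W a \<le> \<beta> a"
  unfolding partial_states_def by blast

lemma entry_le_row: "b \<in> X \<Longrightarrow> W a b \<le> row_sum X W a"
  unfolding row_sum_def using fin by (intro member_le_sum) auto

lemma entry_le_col: "a \<in> X \<Longrightarrow> W a b \<le> col_sum X W b"
  unfolding col_sum_def using fin by (intro member_le_sum) auto

lemma avail_X: "avail X E \<beta> W x \<subseteq> X"
  unfolding avail_def using graph by auto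

lemma finite_avail: "finite (avail X E \<beta> W x)"
  using avail_X fin finite_subset by blast

lemma gibbs_set:
  assumes "avail X E \<beta> W x \<noteq> {}"
  shows "set_pmf (gibbs X E \<beta> lam kc ka \<gamma> W x) = avail X E \<beta> W x"
proof -
  let ?B = "avail X E \<beta> W x"
  let ?e = "\<lambda>y. exp (\<gamma> * fit X \<beta> lam kc ka (mat_add W (unit_mat x y)) x y)"
  have spos: "0 < sum ?e ?B" using assms finite_avail by (intro sum_pos) auto
  define g where "g y = (if y \<in> ?B then ?e y / sum ?e ?B else 0)" for y
  have "set_pmf (embed_pmf g) = {y. g y \<noteq> 0}"
  proof (rule embed_set[OF finite_avail])
    show "0 \<le> g y" for y using spos by (simp add: g_def)
    show "y \<notin> ?B \<Longrightarrow> g y = 0" for y by (simp add: g_def)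
    have "sum g ?B = sum (\<lambda>y. ?e y / sum ?e ?B) ?B" by (simp add: g_def)
    also have "\<dots> = 1" using spos by (simp add: sum_divide_distrib[symmetric])
    finally show "sum g ?B = 1" .
  qed
  also have "{y. g y \<noteq> 0} = ?B" using spos by (auto simp: g_def)
  finally show ?thesis unfolding gibbs_def g_def .
qed

lemma nu_sum_pos: "x \<in> X \<Longrightarrow> 0 < \<nu> x \<Longrightarrow> 0 < (\<Sum>x\<in>X. \<nu> x)"
  using fin \<nu>_nonneg by (metis sum_pos2)

lemma unit_sel:
  assumes "0 < (\<Sum>x\<in>X. \<nu> x)"
  shows "set_pmf (embed_pmf (\<lambda>x. if x \<in> X then \<nu> x / (\<Sum>x'\<in>X. \<nu> x') else 0)) =
         {x. x \<in> X \<and> \<nu> x \<noteq> 0}"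
proof -
  have "set_pmf (embed_pmf (\<lambda>x. if x \<in> X then \<nu> x / (\<Sum>x'\<in>X. \<nu> x') else 0)) =
         {x. (if x \<in> X then \<nu> x / (\<Sum>x'\<in>X. \<nu> x') else 0) \<noteq> 0}"
  proof (rule embed_set[OF fin])
    show "sum (\<lambda>x. if x \<in> X then \<nu> x / (\<Sum>x'\<in>X. \<nu> x') else 0) X = 1"
      using assms by (simp add: sum_divide_distrib[symmetric])
  qed (use assms \<nu>_nonneg in auto)
  then show ?thesis using assms by auto
qed

lemma yb_sel:
  assumes "W \<in> S" "0 < row_sum X W x"
  shows "set_pmf (embed_pmf (\<lambda>yb. real (W x yb) / real (row_sum X W x))) = {yb. 0 < W x yb}"
proof -
  have "set_pmf (embed_pmf (\<lambda>yb. real (W x yb) / real (row_sum X W x))) =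
     {yb. real (W x yb) / real (row_sum X W x) \<noteq> 0}"
  proof (rule embed_set[OF fin])
    show "yb \<notin> X \<Longrightarrow> real (W x yb) / real (row_sum X W x) = 0" for yb
      using S_EX[OF assms(1), of x yb] by (cases "W x yb = 0") auto
    have "(\<Sum>yb\<in>X. real (W x yb) / real (row_sum X W x)) = real (row_sum X W x) / real (row_sum X W x)"
      by (simp add: sum_divide_distrib[symmetric] row_sum_def)
    also have "\<dots> = 1" using assms(2) by simp
    finally show "(\<Sum>yb\<in>X. real (W x yb) / real (row_sum X W x)) = 1" .
  qed auto
  then show ?thesis using assms(2) by auto
qed

lemma add_in_S:
  assumes "W \<in> S" "x \<in> X" "row_sum X W x < \<alpha> x" "y \<in> avail X E \<beta> W x"
  shows "mat_add W (unit_mat x y) \<in> S"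
proof -
  have yX: "y \<in> X" and xyE: "(x, y) \<in> E" and cy: "col_sum X W y < \<beta> y"
    using assms(4) avail_X by (auto simp: avail_def)
  show ?thesis unfolding partial_states_def
  proof (intro CollectI conjI ballI allI impI)
    fix a b assume "(a, b) \<notin> E"
    then show "mat_add W (unit_mat x y) a b = 0"
      using assms(1) xyE unfolding partial_states_def by (auto simp: mat_add_def unit_mat_def)
  next
    fix a assume "a \<in> X"
    then show "row_sum X (mat_add W (unit_mat x y)) a \<le> \<alpha> a"
      using row_add[OF fin yX, of W x a] S_row[OF assms(1)] assms(3) by auto
  next
    fix b assume "b \<in> X"
    then show "col_sum X (mat_add W (unit_mat x y)) b \<le> \<beta> b"
      using col_add[OF fin assms(2), of W y b] S_col[OF assms(1)] cy by auto
  qed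
qed

lemma sub_in_S:
  assumes "W \<in> S" "0 < W x yb"
  shows "mat_sub W (unit_mat x yb) \<in> S" "row_sum X (mat_sub W (unit_mat x yb)) x < \<alpha> x"
proof -
  have xX: "x \<in> X" and ybX: "yb \<in> X" using S_EX[OF assms] by auto
  show "mat_sub W (unit_mat x yb) \<in> S" unfolding partial_states_def
  proof (intro CollectI conjI ballI allI impI)
    fix a b assume "(a, b) \<notin> E"
    then show "mat_sub W (unit_mat x yb) a b = 0"
      using assms(1) unfolding partial_states_def by (auto simp: mat_sub_def unit_mat_def)
  next
    fix a assume "a \<in> X"
    then show "row_sum X (mat_sub W (unit_mat x yb)) a \<le> \<alpha> a"
      using row_sub[of X yb W x, OF fin ybX assms(2), of a] S_row[OF assms(1)] by fastforce
  next
    fix b assume "b \<in> X"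
    then show "col_sum X (mat_sub W (unit_mat x yb)) b \<le> \<beta> b"
      using col_sub[of X x W yb, OF fin xX assms(2), of b] S_col[OF assms(1)] by fastforce
  qed
  show "row_sum X (mat_sub W (unit_mat x yb)) x < \<alpha> x"
    using row_sub[of X yb W x, OF fin ybX assms(2), of x] S_row[OF assms(1) xX] by simp
qed

lemma P_bounds: "W \<in> S \<Longrightarrow> x \<in> X \<Longrightarrow> 0 \<le> Pall W x \<and> Pall W x \<le> 1"
  using P_nonneg P_sum by fastforce

lemma step_closed:
  assumes W: "W \<in> S" and W': "W' \<in> set_pmf (K W)"
  shows "W' \<in> S"
proof (cases "(\<Sum>x\<in>X. \<nu> x) = 0")
  case True
  then show ?thesis using W W' by (simp add: step_def)
next
  case False
  then have spos: "0 < (\<Sum>x\<in>X. \<nu> x)" using \<nu>_nonneg by (simp add: sum_nonneg order_le_neq_trans)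
  from W' False obtain x where x: "x \<in> X"
    and W'a: "W' \<in> set_pmf (activation X E \<beta> lam kc ka \<gamma> Pall W x)"
    by (auto simp: step_def unit_sel[OF spos])
  have Pb: "0 \<le> Pall W x" "Pall W x \<le> 1" using P_bounds[OF W x] by auto
  from W'a obtain b where b: "b \<in> set_pmf (bernoulli_pmf (Pall W x))"
    and W'b: "W' \<in> set_pmf (if b then alloc_move X E \<beta> lam kc ka \<gamma> W x else dist_move X E \<beta> lam kc ka \<gamma> W x)"
    by (auto simp: activation_def)
  show ?thesis
  proof (cases b)
    case True
    then have "0 < Pall W x" using bern_True'[OF Pb] b by simp
    then have rx: "row_sum X W x < \<alpha> x" using Pall_full W x S_row[OF W x] by force
    show ?thesis
    proof (cases "avail X E \<beta> W x = {}")
      case True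
      then show ?thesis using W'b \<open>b\<close> W by (simp add: alloc_move_def)
    next
      case False
      then obtain y where "y \<in> avail X E \<beta> W x" "W' = mat_add W (unit_mat x y)"
        using W'b \<open>b\<close> by (auto simp: alloc_move_def gibbs_set)
      then show ?thesis using add_in_S[OF W x rx] by simp
    qed
  next
    case bF: False
    then have "Pall W x < 1" using bern_False'[OF Pb] b by simp
    then have "Pdis W x \<noteq> 0" using P_sum W x by force
    then have rpos: "0 < row_sum X W x" using Pdis_empty W x by force
    from W'b bF obtain yb where yb: "0 < W x yb" and
      W'c: "W' \<in> set_pmf (let W1 = mat_sub W (unit_mat x yb) in
              if avail X E \<beta> W1 x = {} then return_pmf W
              else map_pmf (\<lambda>y. mat_add W1 (unit_mat x y)) (gibbs X E \<beta> lam kc ka \<gamma> W1 x))"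
      by (auto simp: dist_move_def yb_sel[OF W rpos])
    define W1 where "W1 = mat_sub W (unit_mat x yb)"
    show ?thesis
    proof (cases "avail X E \<beta> W1 x = {}")
      case True
      then show ?thesis using W'c W by (simp add: W1_def Let_def)
    next
      case False
      then obtain y where "y \<in> avail X E \<beta> W1 x" "W' = mat_add W1 (unit_mat x y)"
        using W'c by (auto simp: W1_def Let_def gibbs_set)
      then show ?thesis using add_in_S[OF sub_in_S(1)[OF W yb] x sub_in_S(2)[OF W yb]] unfolding W1_def by simp
    qed
  qed
qed

lemma step_set:
  assumes spos: "0 < (\<Sum>x\<in>X. \<nu> x)" and x: "x \<in> X" and nx: "0 < \<nu> x"
    and W': "W' \<in> set_pmf (activation X E \<beta> lam kc ka \<gamma> Pall W x)"
  shows "W' \<in> set_pmf (K W)"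
proof -
  have e: "K W = bind_pmf (embed_pmf (\<lambda>x. if x \<in> X then \<nu> x / (\<Sum>x'\<in>X. \<nu> x') else 0))
             (activation X E \<beta> lam kc ka \<gamma> Pall W)"
    unfolding step_def using spos by simp
  have xs: "x \<in> set_pmf (embed_pmf (\<lambda>x. if x \<in> X then \<nu> x / (\<Sum>x'\<in>X. \<nu> x') else 0))"
    unfolding unit_sel[OF spos] using x nx by simp
  show ?thesis unfolding e set_bind_pmf using xs W' by blast
qed

lemma alloc_pos:
  assumes W: "W \<in> S" and x: "x \<in> X" and rx: "row_sum X W x < \<alpha> x" and y: "y \<in> avail X E \<beta> W x"
  shows "mat_add W (unit_mat x y) \<in> set_pmf (K W)"
proof -
  have nx: "0 < \<nu> x" using h1 x rx by auto
  have spos: "0 < (\<Sum>x\<in>X. \<nu> x)" by (rule nu_sum_pos[OF x nx])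
  have Pb: "0 \<le> Pall W x" "Pall W x \<le> 1" using P_bounds[OF W x] by auto
  have T: "True \<in> set_pmf (bernoulli_pmf (Pall W x))"
    using bern_True[OF Pb] h2 W x rx by auto
  have ne: "avail X E \<beta> W x \<noteq> {}" using y by auto
  have g: "mat_add W (unit_mat x y) \<in> set_pmf (alloc_move X E \<beta> lam kc ka \<gamma> W x)"
    unfolding alloc_move_def using ne y by (simp add: gibbs_set)
  have "mat_add W (unit_mat x y) \<in> set_pmf (activation X E \<beta> lam kc ka \<gamma> Pall W x)"
    unfolding activation_def set_bind_pmf using T g by (intro UN_I[of True]) simp_all
  then show ?thesis by (rule step_set[OF spos x nx])
qed

lemma dist_pos:
  assumes W: "W \<in> S" and z: "z \<in> X" and rz: "row_sum X W z = \<alpha> z" and yb: "0 < W z yb"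
    and ys: "ys \<in> avail X E \<beta> (mat_sub W (unit_mat z yb)) z"
  shows "mv W z yb ys \<in> set_pmf (K W)"
proof -
  have ybX: "yb \<in> X" using S_EX[OF W yb] by auto
  have rpos: "0 < row_sum X W z" using yb entry_le_row[OF ybX, of W z] by linarith
  have nx: "0 < \<nu> z" using h1 z rpos rz by auto
  have spos: "0 < (\<Sum>x\<in>X. \<nu> x)" by (rule nu_sum_pos[OF z nx])
  have Pb: "0 \<le> Pall W z" "Pall W z \<le> 1" using P_bounds[OF W z] by auto
  have P0: "Pall W z = 0" using Pall_full W z rz by auto
  have F: "False \<in> set_pmf (bernoulli_pmf (Pall W z))"
    using bern_False[OF Pb] P0 by auto
  have ne: "avail X E \<beta> (mat_sub W (unit_mat z yb)) z \<noteq> {}" using ys by auto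
  have ybs: "yb \<in> set_pmf (embed_pmf (\<lambda>yb. real (W z yb) / real (row_sum X W z)))"
    unfolding yb_sel[OF W rpos] using yb by simp
  have inner: "mv W z yb ys \<in> set_pmf (let W1 = mat_sub W (unit_mat z yb) in
              if avail X E \<beta> W1 z = {} then return_pmf W
              else map_pmf (\<lambda>y. mat_add W1 (unit_mat z y)) (gibbs X E \<beta> lam kc ka \<gamma> W1 z))"
    unfolding Let_def using ne ys by (simp add: gibbs_set mv_def)
  have "mv W z yb ys \<in> set_pmf (dist_move X E \<beta> lam kc ka \<gamma> W z)"
    unfolding dist_move_def set_bind_pmf using ybs inner by blast
  then have "mv W z yb ys \<in> set_pmf (activation X E \<beta> lam kc ka \<gamma> Pall W z)"
    unfolding activation_def set_bind_pmf using F by (intro UN_I[of False]) simp_all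
  then show ?thesis by (rule step_set[OF spos z nx])
qed

end


context asetting begin

abbreviation "Rel \<equiv> {(s,t). s \<in> S \<and> s \<notin> AS \<and> t \<in> set_pmf (K s)}"

definition deficit :: "'x mat \<Rightarrow> nat" where
  "deficit W = (\<Sum>x\<in>X. \<alpha> x - row_sum X W x)"

lemma aug_inX: "aug X E \<beta> W k x \<Longrightarrow> x \<in> X"
  using graph by (cases k) auto

lemma hallD_X: "x \<in> hallD E W x0 \<Longrightarrow> W \<in> S \<Longrightarrow> x0 \<in> X \<Longrightarrow> x \<in> X"
  by (induction rule: hallD.induct) (auto dest: S_EX)

lemma hallD_aug: "x \<in> hallD E W x0 \<Longrightarrow> (\<exists>k. aug X E \<beta> W k x) \<longrightarrow> (\<exists>k. aug X E \<beta> W k x0)"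
proof (induction rule: hallD.induct)
  case baseD
  then show ?case by simp
next
  case (stepD x y x')
  show ?case
  proof
    assume "\<exists>k. aug X E \<beta> W k x'"
    then obtain k where "aug X E \<beta> W k x'" by blast
    then have "aug X E \<beta> W (Suc k) x" using stepD by auto
    then show "\<exists>k. aug X E \<beta> W k x0" using stepD by blast
  qed
qed

lemma hall:
  assumes W: "W \<in> S" and x0: "x0 \<in> X" and r: "row_sum X W x0 < \<alpha> x0"
  shows "\<exists>k. aug X E \<beta> W k x0"
proof (rule ccontr)
  assume na: "\<not> (\<exists>k. aug X E \<beta> W k x0)"
  define D where "D = hallD E W x0"
  have DX: "D \<subseteq> X" using hallD_X W x0 D_def by blast
  have finD: "finite D" using DX fin finite_subset by blast
  have x0D: "x0 \<in> D" unfolding D_def by (rule hallD.baseD)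
  have noav: "avail X E \<beta> W x = {}" if "x \<in> D" for x
  proof (rule ccontr)
    assume "avail X E \<beta> W x \<noteq> {}"
    then have "aug X E \<beta> W 0 x" using that DX by auto
    then show False using hallD_aug[OF that[unfolded D_def]] na by blast
  qed
  define N where "N = nbhd E D"
  have NX: "N \<subseteq> X" unfolding N_def nbhd_def using graph by auto
  have finN: "finite N" using NX fin finite_subset by blast
  have full: "col_sum X W y = \<beta> y" if yN: "y \<in> N" for y
  proof -
    obtain x where x: "x \<in> D" "(x, y) \<in> E" using yN unfolding N_def nbhd_def by blast
    have "y \<notin> avail X E \<beta> W x" using noav[OF x(1)] by simp
    then have "\<not> col_sum X W y < \<beta> y" using x(2) by (simp add: avail_def)
    moreover have "y \<in> X" using yN NX by blast
    ultimately show ?thesis using S_col[OF W] by (meson not_less order_antisym)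
  qed
  have zero: "W x y = 0" if yN: "y \<in> N" and xD: "x \<in> X - D" for x y
  proof (rule ccontr)
    assume "W x y \<noteq> 0"
    then have pos: "0 < W x y" by simp
    obtain x1 where x1: "x1 \<in> D" "(x1, y) \<in> E" using yN unfolding N_def nbhd_def by blast
    have "x \<in> D" unfolding D_def using hallD.stepD[OF x1(1)[unfolded D_def] x1(2) pos] .
    then show False using xD by blast
  qed
  have "(\<Sum>y\<in>N. \<beta> y) = (\<Sum>y\<in>N. col_sum X W y)" using full by simp
  also have "\<dots> = (\<Sum>y\<in>N. \<Sum>x\<in>D. W x y)"
    unfolding col_sum_def
    by (intro sum.cong refl sum.mono_neutral_right[OF fin DX]) (use zero in blast)
  also have "\<dots> = (\<Sum>x\<in>D. \<Sum>y\<in>N. W x y)" by (rule sum.swap)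
  also have "\<dots> \<le> (\<Sum>x\<in>D. row_sum X W x)"
    unfolding row_sum_def by (intro sum_mono sum_mono2[OF fin NX]) auto
  also have "\<dots> < (\<Sum>x\<in>D. \<alpha> x)"
    by (rule sum_strict_mono_ex1[OF finD]) (use S_row[OF W] DX x0D r in auto)
  finally have "(\<Sum>y\<in>nbhd E D. \<beta> y) < (\<Sum>x\<in>D. \<alpha> x)" unfolding N_def .
  moreover have "(\<Sum>x\<in>D. \<alpha> x) \<le> (\<Sum>y\<in>nbhd E D. \<beta> y)" using h3 DX by blast
  ultimately show False by linarith
qed

lemma notA: "W \<in> S \<Longrightarrow> W \<notin> AS \<Longrightarrow> \<exists>x\<in>X. row_sum X W x < \<alpha> x"
  unfolding alloc_states_def using S_row by fastforce

lemma unsat_notA: assumes "x \<in> X" "row_sum X W x < \<alpha> x" shows "W \<notin> AS"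
proof
  assume "W \<in> AS"
  then have "row_sum X W x = \<alpha> x" using assms(1) unfolding alloc_states_def by blast
  then show False using assms(2) by simp
qed

lemma mv_row:
  assumes W: "W \<in> S" and yb: "0 < W z yb" and ys: "ys \<in> X"
  shows "row_sum X (mv W z yb ys) a = row_sum X W a"
proof -
  have ybX: "yb \<in> X" using S_EX[OF W yb] by auto
  show ?thesis
    unfolding mv_def row_add[OF fin ys] using row_sub[of X yb W z, OF fin ybX yb, of a] by simp
qed

lemma mv_col:
  assumes W: "W \<in> S" and yb: "0 < W z yb"
  shows "col_sum X (mv W z yb ys) b + (if b = yb then 1 else 0) = col_sum X W b + (if b = ys then 1 else 0)"
proof -
  have zX: "z \<in> X" using S_EX[OF W yb] by auto
  show ?thesis
    unfolding mv_def col_add[OF fin zX] using col_sub[of X z W yb, OF fin zX yb, of b] by simp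
qed

lemma deficit_add:
  assumes W: "W \<in> S" and x0: "x0 \<in> X" and r: "row_sum X W x0 < \<alpha> x0"
    and y: "y \<in> avail X E \<beta> W x0"
  shows "deficit (mat_add W (unit_mat x0 y)) < deficit W"
proof -
  have yX: "y \<in> X" using y avail_X by blast
  show ?thesis unfolding deficit_def
    by (rule sum_strict_mono_ex1[OF fin]) (use row_add[OF fin yX, of W x0] r x0 in auto)
qed

lemma shorten:
  assumes W: "W \<in> S" and H: "\<forall>z. aug X E \<beta> W 0 z \<longrightarrow> row_sum X W z = \<alpha> z"
  shows "aug X E \<beta> W (Suc k) x \<Longrightarrow> (\<forall>i\<le>k. \<not> aug X E \<beta> W i x) \<Longrightarrow>
    \<exists>z yb ys. aug X E \<beta> W 0 z \<and> 0 < W z yb \<and> ys \<in> avail X E \<beta> (mat_sub W (unit_mat z yb)) z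
       \<and> aug X E \<beta> (mv W z yb ys) k x"
proof (induction k arbitrary: x)
  case 0
  from 0(1) obtain y1 x1 where xy1: "(x, y1) \<in> E" and p1: "0 < W x1 y1" and a1: "aug X E \<beta> W 0 x1"
    by auto
  have xX: "x \<in> X" and y1X: "y1 \<in> X" using xy1 graph by auto
  have x1X: "x1 \<in> X" using a1 by simp
  obtain ys where ys: "ys \<in> avail X E \<beta> W x1" using a1 by auto
  have "\<not> aug X E \<beta> W 0 x" using 0(2) by blast
  then have "avail X E \<beta> W x = {}" using xX by simp
  then have "\<not> col_sum X W y1 < \<beta> y1" using xy1 by (auto simp: avail_def)
  then have c1: "col_sum X W y1 = \<beta> y1" using S_col[OF W y1X] by simp
  have ysd: "(x1, ys) \<in> E" "col_sum X W ys < \<beta> ys" using ys by (auto simp: avail_def)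
  have ne: "ys \<noteq> y1" using c1 ysd by auto
  have "col_sum X (mat_sub W (unit_mat x1 y1)) ys = col_sum X W ys"
    using col_sub[of X x1 W y1, OF fin x1X p1, of ys] ne by simp
  then have ys': "ys \<in> avail X E \<beta> (mat_sub W (unit_mat x1 y1)) x1"
    using ysd by (simp add: avail_def)
  have "col_sum X (mv W x1 y1 ys) y1 + 1 = col_sum X W y1"
    using mv_col[OF W p1, of ys y1] ne by simp
  then have "y1 \<in> avail X E \<beta> (mv W x1 y1 ys) x" using c1 xy1 by (simp add: avail_def)
  then have "aug X E \<beta> (mv W x1 y1 ys) 0 x" using xX by auto
  then show ?case using a1 p1 ys' by blast
next
  case (Suc j)
  from Suc(2) obtain y1 x1 where xy1: "(x, y1) \<in> E" and p1: "0 < W x1 y1"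
    and a1: "aug X E \<beta> W (Suc j) x1" by auto
  have nx1: "\<forall>i\<le>j. \<not> aug X E \<beta> W i x1"
  proof (intro allI impI notI)
    fix i assume "i \<le> j" "aug X E \<beta> W i x1"
    then have "aug X E \<beta> W (Suc i) x" using xy1 p1 by auto
    moreover have "\<not> aug X E \<beta> W (Suc i) x" using Suc(3) \<open>i \<le> j\<close> Suc_le_mono by blast
    ultimately show False by blast
  qed
  obtain z yb ys where z: "aug X E \<beta> W 0 z" "0 < W z yb"
    "ys \<in> avail X E \<beta> (mat_sub W (unit_mat z yb)) z" "aug X E \<beta> (mv W z yb ys) j x1"
    using Suc.IH[OF a1 nx1] by blast
  have "z \<noteq> x1" using z(1) nx1 by auto
  then have "mv W z yb ys x1 y1 = W x1 y1" by (simp add: mv_other)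
  then have "0 < mv W z yb ys x1 y1" using p1 by simp
  then have "aug X E \<beta> (mv W z yb ys) (Suc j) x" using xy1 z(4) by auto
  then show ?case using z by blast
qed

lemma descent:
  "\<forall>W. W \<in> S \<longrightarrow> (\<exists>x0\<in>X. row_sum X W x0 < \<alpha> x0 \<and> aug X E \<beta> W m x0) \<longrightarrow>
     (\<exists>W'. (W, W') \<in> Rel\<^sup>* \<and> W' \<in> S \<and> deficit W' < deficit W)"
proof (induction m rule: less_induct)
  case (less m)
  show ?case
  proof (intro allI impI)
    fix W assume W: "W \<in> S" and ex: "\<exists>x0\<in>X. row_sum X W x0 < \<alpha> x0 \<and> aug X E \<beta> W m x0"
    then obtain x0 where x0: "x0 \<in> X" "row_sum X W x0 < \<alpha> x0" "aug X E \<beta> W m x0" by blast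
    have WnA: "W \<notin> AS" using unsat_notA x0 by blast
    show "\<exists>W'. (W, W') \<in> Rel\<^sup>* \<and> W' \<in> S \<and> deficit W' < deficit W"
    proof (cases "\<exists>x\<in>X. \<exists>i<m. row_sum X W x < \<alpha> x \<and> aug X E \<beta> W i x")
      case True
      then obtain x i where "x \<in> X" "i < m" "row_sum X W x < \<alpha> x" "aug X E \<beta> W i x" by blast
      then show ?thesis using less.IH[of i] W by blast
    next
      case False
      then have minimal: "\<And>x i. x \<in> X \<Longrightarrow> i < m \<Longrightarrow> row_sum X W x < \<alpha> x \<Longrightarrow> \<not> aug X E \<beta> W i x"
        by blast
      show ?thesis
      proof (cases m)
        case 0
        then obtain y where y: "y \<in> avail X E \<beta> W x0" using x0(3) by auto
        define W' where "W' = mat_add W (unit_mat x0 y)"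
        have st: "W' \<in> set_pmf (K W)" unfolding W'_def by (rule alloc_pos[OF W x0(1,2) y])
        have "(W, W') \<in> Rel\<^sup>*" using st W WnA by blast
        moreover have "W' \<in> S" using step_closed[OF W st] .
        moreover have "deficit W' < deficit W" unfolding W'_def by (rule deficit_add[OF W x0(1,2) y])
        ultimately show ?thesis by blast
      next
        case (Suc j)
        have H: "\<forall>z. aug X E \<beta> W 0 z \<longrightarrow> row_sum X W z = \<alpha> z"
        proof (intro allI impI)
          fix z assume az: "aug X E \<beta> W 0 z"
          then have zX: "z \<in> X" by simp
          have "\<not> row_sum X W z < \<alpha> z" using minimal[OF zX, of 0] az Suc by auto
          then show "row_sum X W z = \<alpha> z" using S_row[OF W zX] by simp
        qed
        have nx0: "\<forall>i\<le>j. \<not> aug X E \<beta> W i x0" using minimal[OF x0(1)] x0(2) Suc by auto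
        obtain z yb ys where z: "aug X E \<beta> W 0 z" "0 < W z yb"
          "ys \<in> avail X E \<beta> (mat_sub W (unit_mat z yb)) z" "aug X E \<beta> (mv W z yb ys) j x0"
          using shorten[OF W H, of j x0] x0(3) Suc nx0 by blast
        define W' where "W' = mv W z yb ys"
        have zX: "z \<in> X" using z(1) by simp
        have ysX: "ys \<in> X" using z(3) avail_X by blast
        have st: "W' \<in> set_pmf (K W)" unfolding W'_def
          by (rule dist_pos[OF W zX _ z(2) z(3)]) (use H z(1) in blast)
        have W'S: "W' \<in> S" using step_closed[OF W st] .
        have rows: "row_sum X W' a = row_sum X W a" for a
          unfolding W'_def by (rule mv_row[OF W z(2) ysX])
        have defeq: "deficit W' = deficit W" unfolding deficit_def rows ..
        have "\<exists>x0\<in>X. row_sum X W' x0 < \<alpha> x0 \<and> aug X E \<beta> W' j x0"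
          using x0 rows z(4) W'_def by auto
        then obtain W'' where W'': "(W', W'') \<in> Rel\<^sup>*" "W'' \<in> S" "deficit W'' < deficit W'"
          using less.IH[of j] Suc W'S by blast
        have "(W, W') \<in> Rel" using st W WnA by blast
        then have "(W, W'') \<in> Rel\<^sup>*" using W''(1) by (rule converse_rtrancl_into_rtrancl)
        then show ?thesis using W'' defeq by auto
      qed
    qed
  qed
qed

lemma reach_alloc: "W \<in> S \<Longrightarrow> \<exists>t\<in>AS. (W, t) \<in> Rel\<^sup>*"
proof (induction "deficit W" arbitrary: W rule: less_induct)
  case less
  show ?case
  proof (cases "W \<in> AS")
    case True
    then show ?thesis by blast
  next
    case False
    obtain x0 where x0: "x0 \<in> X" "row_sum X W x0 < \<alpha> x0" using notA[OF less.prems False] by blast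
    obtain k where k: "aug X E \<beta> W k x0" using hall[OF less.prems x0] by blast
    obtain W' where W': "(W, W') \<in> Rel\<^sup>*" "W' \<in> S" "deficit W' < deficit W"
      using descent[of k] less.prems x0 k by blast
    obtain t where "t \<in> AS" "(W', t) \<in> Rel\<^sup>*" using less.hyps[OF W'(3) W'(2)] by blast
    then show ?thesis using W'(1) by (meson rtrancl_trans)
  qed
qed

lemma finite_S: "finite S"
proof -
  define M where "M = sum \<alpha> X"
  define F where "F = {g :: 'x \<Rightarrow> nat. \<forall>b. (b \<in> X \<longrightarrow> g b \<in> {0..M}) \<and> (b \<notin> X \<longrightarrow> g b = 0)}"
  have fF: "finite F" unfolding F_def by (rule finite_set_of_finite_funs[OF fin]) simp
  have fG: "finite {W :: 'x mat. \<forall>a. (a \<in> X \<longrightarrow> W a \<in> F) \<and> (a \<notin> X \<longrightarrow> W a = (\<lambda>_. 0))}"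
    by (rule finite_set_of_finite_funs[OF fin fF])
  have "S \<subseteq> {W :: 'x mat. \<forall>a. (a \<in> X \<longrightarrow> W a \<in> F) \<and> (a \<notin> X \<longrightarrow> W a = (\<lambda>_. 0))}"
  proof (intro subsetI CollectI allI conjI impI)
    fix W a assume W: "W \<in> S"
    have z: "W a b = 0" if "a \<notin> X \<or> b \<notin> X" for b
      using S_EX[OF W, of a b] that by (cases "W a b = 0") auto
    show "a \<notin> X \<Longrightarrow> W a = (\<lambda>_. 0)" using z by auto
    assume aX: "a \<in> X"
    have "W a b \<le> M" if "b \<in> X" for b
    proof -
      have "W a b \<le> row_sum X W a" by (rule entry_le_row[OF that])
      also have "\<dots> \<le> \<alpha> a" by (rule S_row[OF W aX])
      also have "\<dots> \<le> M" unfolding M_def using fin aX by (intro member_le_sum) auto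
      finally show ?thesis .
    qed
    then show "W a \<in> F" unfolding F_def using z by auto
  qed
  then show ?thesis using fG finite_subset by blast
qed

end

theorem theorem2:
  fixes X :: "'x set" and E :: "('x \<times> 'x) set"
    and \<alpha> \<beta> :: "'x \<Rightarrow> nat"
    and lam :: "'x \<Rightarrow> real" and kc ka \<gamma> :: real
    and \<nu> :: "'x \<Rightarrow> real"
    and Pall Pdis :: "'x mat \<Rightarrow> 'x \<Rightarrow> real"
    and W0 :: "'x mat"
  assumes fin: "finite X"
    and graph: "E \<subseteq> X \<times> X"
    and kc: "kc \<ge> 0" and ka: "ka \<ge> 0" and \<gamma>: "\<gamma> > 0"
    and \<nu>_nonneg: "\<forall>x\<in>X. \<nu> x \<ge> 0"
    and P_nonneg: "\<forall>W\<in>partial_states X E \<alpha> \<beta>. \<forall>x\<in>X. Pall W x \<ge> 0 \<and> Pdis W x \<ge> 0"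
    and P_sum: "\<forall>W\<in>partial_states X E \<alpha> \<beta>. \<forall>x\<in>X. Pall W x + Pdis W x = 1"
    and Pall_full: "\<forall>W\<in>partial_states X E \<alpha> \<beta>. \<forall>x\<in>X. row_sum X W x = \<alpha> x \<longrightarrow> Pall W x = 0"
    and Pdis_empty: "\<forall>W\<in>partial_states X E \<alpha> \<beta>. \<forall>x\<in>X. row_sum X W x = 0 \<longrightarrow> Pdis W x = 0"
    and h1: "\<forall>x\<in>X. \<alpha> x > 0 \<longrightarrow> \<nu> x > 0"
    and h2: "\<forall>W\<in>partial_states X E \<alpha> \<beta>. \<forall>x\<in>X. row_sum X W x < \<alpha> x \<longrightarrow> Pall W x > 0"
    and h3: "\<forall>D\<subseteq>X. (\<Sum>x\<in>D. \<alpha> x) \<le> (\<Sum>y\<in>nbhd E D. \<beta> y)"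
    and init: "W0 \<in> partial_states X E \<alpha> \<beta>"
  shows "(\<lambda>n. measure_pmf.prob
            (stopped_dist (step X E \<beta> lam kc ka \<gamma> Pall \<nu>) (alloc_states X E \<alpha> \<beta>) W0 n)
            (alloc_states X E \<alpha> \<beta>)) \<longlonglongrightarrow> 1"
proof -
  interpret asetting X E \<alpha> \<beta> lam kc ka \<gamma> \<nu> Pall Pdis
    by (rule asetting.intro[OF fin graph \<nu>_nonneg P_nonneg P_sum Pall_full Pdis_empty h1 h2 h3])
  show ?thesis
    by (rule hitting_generic[OF finite_S init]) (use step_closed reach_alloc in blast)+
qed

end
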